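(* Let $\mathcal R$ be a left-linear TRS and $s,t,u$ terms. (1) If $t\leftarrow_{\mathcal R}s\to_{\mathcal R}u$ then there is a term $v$ with $t\,\nabla_s\,v$ and $v\,\nabla_s\,u$. (2) If $t\leftarrow_{\mathcal R}s\leftrightarrow_{\mathcal B}u$ then there is a term $v$ with $t\,\nabla_s\,v$ and $v\,\tilde\nabla_s\,u$.
   Context: Terms are built from a signature $\mathcal F$ and variables $\mathcal V$. A rule $\ell\to r$ is a pair of terms with $\ell\notin\mathcal V$ and $\mathrm{Var}(r)\subseteq\mathrm{Var}(\ell)$; a TRS is a set of rules, an ES a set of equations; a TRS is left-linear if no left-hand side contains a variable twice. For a set $\mathcal E$ of pairs of terms, $s\to_{\mathcal E}t$ iff $s|_p=\ell\sigma$ and $t=s[r\sigma]_p$ for some $(\ell,r)\in\mathcal E$, position $p$ and substitution $\sigma$; $\leftarrow_{\mathcal E}$ is its inverse and $\leftrightarrow_{\mathcal E}$ its symmetric closure. $\mathcal B$ is a fixed ES with $\mathrm{Var}(\ell)=\mathrm{Var}(r)$ for all $\ell\approx r\in\mathcal B$; $\sim_{\mathcal B}=\leftrightarrow^*_{\mathcal B}$ and $\mathcal B^\pm=\mathcal B\cup\{t\approx s\mid s\approx t\in\mathcal B\}$. For a TRS $\mathcal R$: $\downarrow_{\mathcal R}=\to^*_{\mathcal R}\cdot\leftarrow^*_{\mathcal R}$ and $s\downarrow^\sim_{\mathcal R}t$ iff $s\to^*_{\mathcal R}\cdot\sim_{\mathcal B}\cdot\leftarrow^*_{\mathcal R}t$.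 Critical pairs: for sets of oriented pairs $\mathcal R_1,\mathcal R_2$ (equations of $\mathcal B^\pm$ read as oriented pairs), an overlap is $\langle\ell_1\to r_1,p,\ell_2\to r_2\rangle$ with $\ell_i\to r_i$ variants of elements of $\mathcal R_i$ without common variables, $p$ a non-variable position of $\ell_2$, $\ell_1$ and $\ell_2|_p$ unifiable, and the two rules not variants of each other if $p=\epsilon$. With an mgu $\sigma$ this yields the critical peak $\ell_2\sigma[r_1\sigma]_p\leftarrow^p\ell_2\sigma\to^\epsilon r_2\sigma$ and critical pair $\ell_2\sigma[r_1\sigma]_p\approx r_2\sigma$. A critical peak $t\leftarrow^p s\to^\epsilon u$ is prime if all proper subterms of $s|_p$ are normal forms of $\to_{\mathcal R}$ (irreducibility is always checked w.r.t. $\mathcal R$, also for overlaps involving $\mathcal B^\pm$). $\mathrm{PCP}(\mathcal R)$ is the set of prime critical pairs from overlaps of $\mathcal R$ with itself; $\mathrm{PCP}^\pm(\mathcal R,\mathcal B^\pm)$ is the set of prime critical pairs from overlaps $\langle\rho_1,p,\rho_2\rangle$ with $\rho_1\in\mathcal R,\rho_2\in\mathcal B^\pm$ or $\rho_1\in\mathcal B^\pm,\rho_2\in\mathcal R$. Triangle notation: $t\,\nabla_s\,u$ iff $s\to^+_{\mathcal R}t$, $s\to^+_{\mathcal R}u$, and ($t\downarrow_{\mathcal R}u$ or $t\leftrightarrow_{\mathrm{PCP}(\mathcal R)}u$). $t\,\tilde\nabla_s\,u$ iff $s\to^+_{\mathcal R}t$, $s\sim_{\mathcal B}u$, and ($t\downarrow^\sim_{\mathcal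 R}u$ or $t\leftrightarrow_{\mathrm{PCP}^\pm(\mathcal R,\mathcal B^\pm)}u$). *)

theory Defs
  imports Main
begin

datatype ('f, 'v) "term" = is_Var: Var 'v | Fun 'f "('f, 'v) term list"

type_synonym pos = "nat list"

primrec subst_apply :: "('f, 'v) term \<Rightarrow> ('v \<Rightarrow> ('f, 'v) term) \<Rightarrow> ('f, 'v) term"
  (infixl "\<cdot>" 67) where
  "Var x \<cdot> \<sigma> = \<sigma> x"
| "Fun f ts \<cdot> \<sigma> = Fun f (map (\<lambda>t. t \<cdot> \<sigma>) ts)"

primrec vars_term :: "('f, 'v) term \<Rightarrow> 'v set" where
  "vars_term (Var x) = {x}"
| "vars_term (Fun f ts) = \<Union> (set (map vars_term ts))"

primrec in_poss :: "pos \<Rightarrow> ('f, 'v) term \<Rightarrow> bool" where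
  "in_poss [] t = True"
| "in_poss (i # p) t = (case t of Var _ \<Rightarrow> False
      | Fun f ts \<Rightarrow> i < length ts \<and> in_poss p (ts ! i))"

text \<open>Subterm at a position, s|_p (meaningful for positions of s).\<close>
primrec subt_at :: "('f, 'v) term \<Rightarrow> pos \<Rightarrow> ('f, 'v) term" where
  "subt_at t [] = t"
| "subt_at t (i # p) = (case t of Var x \<Rightarrow> Var x
      | Fun f ts \<Rightarrow> subt_at (ts ! i) p)"

text \<open>Replacement s[u]_p (meaningful for positions of s).\<close>
primrec replace_at :: "('f, 'v) term \<Rightarrow> pos \<Rightarrow> ('f, 'v) term \<Rightarrow> ('f, 'v) term" where
  "replace_at t [] u = u"
| "replace_at t (i # p) u = (case t of Var x \<Rightarrow> Var x
      | Fun f ts \<Rightarrow> Fun f (ts[i := replace_at (ts ! i) p u]))"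

definition fun_poss :: "pos \<Rightarrow> ('f, 'v) term \<Rightarrow> bool" where
  "fun_poss p t \<longleftrightarrow> in_poss p t \<and> \<not> is_Var (subt_at t p)"

type_synonym ('f, 'v) rule = "('f, 'v) term \<times> ('f, 'v) term"

definition wf_trs :: "('f, 'v) rule set \<Rightarrow> bool" where
  "wf_trs R \<longleftrightarrow> (\<forall>(l, r) \<in> R. \<not> is_Var l \<and> vars_term r \<subseteq> vars_term l)"

definition linear_term :: "('f, 'v) term \<Rightarrow> bool" where
  "linear_term t \<longleftrightarrow> (\<forall>p q x. in_poss p t \<and> in_poss q t \<and>
      subt_at t p = Var x \<and> subt_at t q = Var x \<longrightarrow> p = q)"

definition left_linear :: "('f, 'v) rule set \<Rightarrow> bool" where
  "left_linear R \<longleftrightarrow> (\<forall>(l, r) \<in> R. linear_term l)"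

definition var_balanced :: "('f, 'v) rule set \<Rightarrow> bool" where
  "var_balanced B \<longleftrightarrow> (\<forall>(l, r) \<in> B. vars_term l = vars_term r)"

definition rstep :: "('f, 'v) rule set \<Rightarrow> ('f, 'v) term rel" where
  "rstep E = {(s, t). \<exists>l r p \<sigma>. (l, r) \<in> E \<and> in_poss p s \<and>
      subt_at s p = l \<cdot> \<sigma> \<and> t = replace_at s p (r \<cdot> \<sigma>)}"

definition sym_step :: "('f, 'v) rule set \<Rightarrow> ('f, 'v) term rel" where
  "sym_step E = rstep E \<union> (rstep E)\<inverse>"

definition sym_es :: "('f, 'v) rule set \<Rightarrow> ('f, 'v) rule set" where
  "sym_es B = B \<union> {(t, s). (s, t) \<in> B}"

definition NF :: "('f, 'v) rule set \<Rightarrow> ('f, 'v) term set" where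
  "NF R = {t. \<not> (\<exists>u. (t, u) \<in> rstep R)}"

definition joinable :: "('f, 'v) rule set \<Rightarrow> ('f, 'v) term \<Rightarrow> ('f, 'v) term \<Rightarrow> bool" where
  "joinable R t u \<longleftrightarrow> (\<exists>w. (t, w) \<in> (rstep R)\<^sup>* \<and> (u, w) \<in> (rstep R)\<^sup>*)"

definition joinable_mod :: "('f, 'v) rule set \<Rightarrow> ('f, 'v) rule set \<Rightarrow>
    ('f, 'v) term \<Rightarrow> ('f, 'v) term \<Rightarrow> bool" where
  "joinable_mod R B t u \<longleftrightarrow> (\<exists>w1 w2. (t, w1) \<in> (rstep R)\<^sup>* \<and>
      (w1, w2) \<in> (sym_step B)\<^sup>* \<and> (u, w2) \<in> (rstep R)\<^sup>*)"

definition is_variant :: "('f, 'v) rule \<Rightarrow> ('f, 'v) rule \<Rightarrow> bool" where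
  "is_variant \<rho>' \<rho> \<longleftrightarrow> (\<exists>\<pi>. bij \<pi> \<and> fst \<rho>' = fst \<rho> \<cdot> (Var \<circ> \<pi>) \<and> snd \<rho>' = snd \<rho> \<cdot> (Var \<circ> \<pi>))"

definition vars_rule :: "('f, 'v) rule \<Rightarrow> 'v set" where
  "vars_rule \<rho> = vars_term (fst \<rho>) \<union> vars_term (snd \<rho>)"

definition is_mgu :: "('v \<Rightarrow> ('f, 'v) term) \<Rightarrow> ('f, 'v) term \<Rightarrow> ('f, 'v) term \<Rightarrow> bool" where
  "is_mgu \<sigma> s t \<longleftrightarrow> s \<cdot> \<sigma> = t \<cdot> \<sigma> \<and>
     (\<forall>\<tau>. s \<cdot> \<tau> = t \<cdot> \<tau> \<longrightarrow> (\<exists>\<delta>. \<forall>x. \<tau> x = \<sigma> x \<cdot> \<delta>))"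

definition overlap :: "('f, 'v) rule set \<Rightarrow> ('f, 'v) rule set \<Rightarrow>
    ('f, 'v) rule \<Rightarrow> pos \<Rightarrow> ('f, 'v) rule \<Rightarrow> bool" where
  "overlap R1 R2 \<rho>1 p \<rho>2 \<longleftrightarrow>
     (\<exists>\<rho>. \<rho> \<in> R1 \<and> is_variant \<rho>1 \<rho>) \<and> (\<exists>\<rho>. \<rho> \<in> R2 \<and> is_variant \<rho>2 \<rho>) \<and>
     vars_rule \<rho>1 \<inter> vars_rule \<rho>2 = {} \<and>
     fun_poss p (fst \<rho>2) \<and>
     (\<exists>\<sigma>. fst \<rho>1 \<cdot> \<sigma> = subt_at (fst \<rho>2) p \<cdot> \<sigma>) \<and>
     (p = [] \<longrightarrow> \<not> is_variant \<rho>1 \<rho>2)"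

text \<open>Prime critical pairs of overlaps \<open>\<langle>\<rho>\<^sub>1,p,\<rho>\<^sub>2\<rangle>\<close> with \<open>(\<rho>\<^sub>1,\<rho>\<^sub>2) \<in> \<R>\<^sub>1 \<times> \<R>\<^sub>2\<close>;
  primality (irreducibility) is checked w.r.t. the TRS \<open>R\<close>.\<close>
definition PCP_gen :: "('f, 'v) rule set \<Rightarrow> ('f, 'v) rule set \<Rightarrow> ('f, 'v) rule set \<Rightarrow>
    ('f, 'v) rule set" where
  "PCP_gen R R1 R2 = {(replace_at (fst \<rho>2 \<cdot> \<sigma>) p (snd \<rho>1 \<cdot> \<sigma>), snd \<rho>2 \<cdot> \<sigma>) | \<rho>1 p \<rho>2 \<sigma>.
      overlap R1 R2 \<rho>1 p \<rho>2 \<and> is_mgu \<sigma> (fst \<rho>1) (subt_at (fst \<rho>2) p) \<and>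
      (\<forall>q. in_poss q (fst \<rho>1 \<cdot> \<sigma>) \<and> q \<noteq> [] \<longrightarrow> subt_at (fst \<rho>1 \<cdot> \<sigma>) q \<in> NF R)}"

definition PCP :: "('f, 'v) rule set \<Rightarrow> ('f, 'v) rule set" where
  "PCP R = PCP_gen R R R"

definition PCP_pm :: "('f, 'v) rule set \<Rightarrow> ('f, 'v) rule set \<Rightarrow> ('f, 'v) rule set" where
  "PCP_pm R B = PCP_gen R R (sym_es B) \<union> PCP_gen R (sym_es B) R"

definition nabla :: "('f, 'v) rule set \<Rightarrow> ('f, 'v) term \<Rightarrow> ('f, 'v) term \<Rightarrow> ('f, 'v) term \<Rightarrow> bool" where
  "nabla R s t u \<longleftrightarrow> (s, t) \<in> (rstep R)\<^sup>+ \<and> (s, u) \<in> (rstep R)\<^sup>+ \<and>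
     (joinable R t u \<or> (t, u) \<in> sym_step (PCP R))"

definition nabla_tilde :: "('f, 'v) rule set \<Rightarrow> ('f, 'v) rule set \<Rightarrow>
    ('f, 'v) term \<Rightarrow> ('f, 'v) term \<Rightarrow> ('f, 'v) term \<Rightarrow> bool" where
  "nabla_tilde R B s t u \<longleftrightarrow> (s, t) \<in> (rstep R)\<^sup>+ \<and> (s, u) \<in> (sym_step B)\<^sup>* \<and>
     (joinable_mod R B t u \<or> (t, u) \<in> sym_step (PCP_pm R B))"

end

theory Submission
  imports Defs
begin


lemma subst_compose: "t \<cdot> \<sigma> \<cdot> \<delta> = t \<cdot> (\<lambda>x. \<sigma> x \<cdot> \<delta>)"
  by (induction t) auto

lemma subst_agree: "(\<And>x. x \<in> vars_term t \<Longrightarrow> \<sigma> x = \<tau> x) \<Longrightarrow> t \<cdot> \<sigma> = t \<cdot> \<tau>"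
  by (induction t) auto

lemma subst_agree_rev: "t \<cdot> \<sigma> = t \<cdot> \<tau> \<Longrightarrow> x \<in> vars_term t \<Longrightarrow> \<sigma> x = \<tau> x"
  by (induction t) (auto simp: map_eq_conv)

lemma finite_vars: "finite (vars_term t)"
  by (induction t) auto

lemma subst_Var: "t \<cdot> Var = t"
  by (induction t) (auto simp: map_idI)

lemma in_poss_subst: "in_poss p t \<Longrightarrow> in_poss p (t \<cdot> \<sigma>)"
  by (induction p arbitrary: t) (auto split: term.splits)

lemma subt_at_subst: "in_poss p t \<Longrightarrow> subt_at (t \<cdot> \<sigma>) p = subt_at t p \<cdot> \<sigma>"
  by (induction p arbitrary: t) (auto split: term.splits)

lemma replace_at_subst: "in_poss p t \<Longrightarrow> replace_at t p u \<cdot> \<sigma> = replace_at (t \<cdot> \<sigma>) p (u \<cdot> \<sigma>)"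
  by (induction p arbitrary: t) (auto split: term.splits simp: map_update)

lemma in_poss_append: "in_poss (p @ q) t \<longleftrightarrow> in_poss p t \<and> in_poss q (subt_at t p)"
  by (induction p arbitrary: t) (auto split: term.splits)

lemma subt_at_append: "in_poss p t \<Longrightarrow> subt_at t (p @ q) = subt_at (subt_at t p) q"
  by (induction p arbitrary: t) (auto split: term.splits)

lemma replace_at_append: "in_poss p t \<Longrightarrow> replace_at t (p @ q) u = replace_at t p (replace_at (subt_at t p) q u)"
  by (induction p arbitrary: t) (auto split: term.splits)

lemma in_poss_replace_at: "in_poss p t \<Longrightarrow> in_poss p (replace_at t p u)"
  by (induction p arbitrary: t) (auto split: term.splits)

lemma subt_at_replace_at: "in_poss p t \<Longrightarrow> subt_at (replace_at t p u) p = u"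
  by (induction p arbitrary: t) (auto split: term.splits)

lemma replace_at_replace_at: "in_poss p t \<Longrightarrow> replace_at (replace_at t p u) p w = replace_at t p w"
  by (induction p arbitrary: t) (auto split: term.splits)

lemma replace_at_id: "in_poss p t \<Longrightarrow> replace_at t p (subt_at t p) = t"
  by (induction p arbitrary: t) (auto split: term.splits)

definition par :: "pos \<Rightarrow> pos \<Rightarrow> bool" where
  "par p q \<longleftrightarrow> (\<nexists>r. q = p @ r) \<and> (\<nexists>r. p = q @ r)"

lemma par_Cons: "par (i # p) (j # q) \<longleftrightarrow> i \<noteq> j \<or> par p q"
  by (auto simp: par_def)

lemma par_Nil: "\<not> par [] q" "\<not> par p []"
  by (auto simp: par_def)

lemma par_sym: "par p q \<Longrightarrow> par q p" by (auto simp: par_def)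

lemma par_replace:
  "par p q \<Longrightarrow> in_poss p t \<Longrightarrow> in_poss q t \<Longrightarrow>
   in_poss q (replace_at t p u) \<and> subt_at (replace_at t p u) q = subt_at t q \<and>
   replace_at (replace_at t p u) q w = replace_at (replace_at t q w) p u"
proof (induction p arbitrary: q t)
  case Nil then show ?case by (simp add: par_Nil)
next
  case (Cons i p)
  then obtain j q' where q: "q = j # q'" by (cases q) (auto simp: par_Nil)
  from Cons.prems obtain f ts where t: "t = Fun f ts" by (cases t) auto
  show ?case
  proof (cases "i = j")
    case True
    with Cons.prems q t have "par p q'" by (simp add: par_Cons)
    with Cons.IH[of q' "ts ! i"] Cons.prems q t True show ?thesis by auto
  next
    case False
    with Cons.prems q t show ?thesis by (auto simp: list_update_swap)
  qed
qed



lemma rstepI: "(l, r) \<in> E \<Longrightarrow> in_poss p s \<Longrightarrow> subt_at s p = l \<cdot> \<sigma> \<Longrightarrow> t = replace_at s p (r \<cdot> \<sigma>) \<Longrightarrow> (s, t) \<in> rstep E"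
  unfolding rstep_def by blast

lemma rstepE: "(s, t) \<in> rstep E \<Longrightarrow> (\<And>l r p \<sigma>. (l, r) \<in> E \<Longrightarrow> in_poss p s \<Longrightarrow> subt_at s p = l \<cdot> \<sigma> \<Longrightarrow> t = replace_at s p (r \<cdot> \<sigma>) \<Longrightarrow> P) \<Longrightarrow> P"
  unfolding rstep_def by blast

lemma rstep_root: "(l, r) \<in> E \<Longrightarrow> (l \<cdot> \<sigma>, r \<cdot> \<sigma>) \<in> rstep E"
  by (rule rstepI[of l r E "[]"]) auto

lemma rstep_subst: "(a, b) \<in> rstep E \<Longrightarrow> (a \<cdot> \<delta>, b \<cdot> \<delta>) \<in> rstep E"
proof (elim rstepE)
  fix l r p \<sigma> assume *: "(l, r) \<in> E" "in_poss p a" "subt_at a p = l \<cdot> \<sigma>" "b = replace_at a p (r \<cdot> \<sigma>)"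
  show ?thesis
    by (rule rstepI[of l r E p _ "\<lambda>x. \<sigma> x \<cdot> \<delta>"])
       (use * in \<open>auto simp: in_poss_subst subt_at_subst replace_at_subst subst_compose\<close>)
qed

lemma rstep_ctx: "(a, b) \<in> rstep E \<Longrightarrow> in_poss p s \<Longrightarrow> (replace_at s p a, replace_at s p b) \<in> rstep E"
proof (elim rstepE)
  fix l r q \<sigma> assume *: "(l, r) \<in> E" "in_poss q a" "subt_at a q = l \<cdot> \<sigma>" "b = replace_at a q (r \<cdot> \<sigma>)"
    and p: "in_poss p s"
  show ?thesis
    by (rule rstepI[of l r E "p @ q" _ \<sigma>])
       (use * p in \<open>auto simp: in_poss_append subt_at_append replace_at_append in_poss_replace_at subt_at_replace_at replace_at_replace_at\<close>)
qed

lemma rsteps_ctx: "(a, b) \<in> (rstep E)\<^sup>* \<Longrightarrow> in_poss p s \<Longrightarrow> (replace_at s p a, replace_at s p b) \<in> (rstep E)\<^sup>*"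
proof (induction rule: rtrancl_induct)
  case (step b c)
  have "in_poss p (replace_at s p b)" using step by (simp add: in_poss_replace_at)
  from rstep_ctx[OF step(2) this] step show ?case
    by (simp add: replace_at_replace_at)
qed simp

lemma rsteps_ctx': "(a, b) \<in> (rstep E)\<^sup>* \<Longrightarrow> in_poss p s \<Longrightarrow> subt_at s p = a \<Longrightarrow> (s, replace_at s p b) \<in> (rstep E)\<^sup>*"
  using rsteps_ctx[of a b E p s] by (metis replace_at_id)

lemma args_steps:
  "length ts = length us \<Longrightarrow> (\<And>i. i < length ts \<Longrightarrow> (ts ! i, us ! i) \<in> (rstep E)\<^sup>*) \<Longrightarrow>
   (Fun f (ts0 @ ts), Fun f (ts0 @ us)) \<in> (rstep E)\<^sup>*"
proof (induction ts arbitrary: us ts0)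
  case Nil then show ?case by simp
next
  case (Cons x xs)
  then obtain y ys where us: "us = y # ys" by (cases us) auto
  have xy: "(x, y) \<in> (rstep E)\<^sup>*" using Cons.prems(2)[of 0] us by simp
  have "(replace_at (Fun f (ts0 @ x # xs)) [length ts0] x, replace_at (Fun f (ts0 @ x # xs)) [length ts0] y) \<in> (rstep E)\<^sup>*"
    by (rule rsteps_ctx[OF xy]) simp
  then have 1: "(Fun f (ts0 @ x # xs), Fun f ((ts0 @ [y]) @ xs)) \<in> (rstep E)\<^sup>*"
    by (simp add: list_update_append)
  have 2: "(Fun f ((ts0 @ [y]) @ xs), Fun f ((ts0 @ [y]) @ ys)) \<in> (rstep E)\<^sup>*"
  proof (rule Cons.IH)
    show "length xs = length ys" using Cons.prems us by simp
    fix i assume "i < length xs"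
    then show "(xs ! i, ys ! i) \<in> (rstep E)\<^sup>*" using Cons.prems(2)[of "Suc i"] us by simp
  qed
  from 1 2 us show ?case by simp
qed

lemma subst_steps: "(\<And>x. x \<in> vars_term t \<Longrightarrow> (\<sigma> x, \<tau> x) \<in> (rstep E)\<^sup>*) \<Longrightarrow> (t \<cdot> \<sigma>, t \<cdot> \<tau>) \<in> (rstep E)\<^sup>*"
proof (induction t)
  case (Var x) then show ?case by simp
next
  case (Fun f ts)
  show ?case using args_steps[of "map (\<lambda>t. t \<cdot> \<sigma>) ts" "map (\<lambda>t. t \<cdot> \<tau>) ts" E f "[]"] Fun
    by simp (meson nth_mem)
qed

lemma vars_poss: "x \<in> vars_term t \<Longrightarrow> \<exists>p. in_poss p t \<and> subt_at t p = Var x"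
proof (induction t)
  case (Var y) then show ?case by (intro exI[of _ "[]"]) auto
next
  case (Fun f ts)
  then obtain i where i: "i < length ts" "x \<in> vars_term (ts ! i)" by (auto simp: in_set_conv_nth)
  with Fun.IH[OF nth_mem[OF i(1)] i(2)] obtain p where "in_poss p (ts ! i) \<and> subt_at (ts ! i) p = Var x" by auto
  with i show ?case by (intro exI[of _ "i # p"]) auto
qed

lemma poss_decomp:
  "in_poss q (l \<cdot> \<theta>) \<Longrightarrow> fun_poss q l \<or> (\<exists>q1 q2 x. q = q1 @ q2 \<and> in_poss q1 l \<and> subt_at l q1 = Var x \<and> in_poss q2 (\<theta> x))"
proof (induction l arbitrary: q)
  case (Var x) then show ?case by (intro disjI2 exI[of _ "[]"] exI[of _ q]) auto
next
  case (Fun f ts)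
  show ?case
  proof (cases q)
    case Nil then show ?thesis by (simp add: fun_poss_def)
  next
    case (Cons i q')
    with Fun.prems have i: "i < length ts" "in_poss q' (ts ! i \<cdot> \<theta>)" by auto
    with Fun.IH[of "ts ! i" q'] have "fun_poss q' (ts ! i) \<or> (\<exists>q1 q2 x. q' = q1 @ q2 \<and> in_poss q1 (ts ! i) \<and> subt_at (ts ! i) q1 = Var x \<and> in_poss q2 (\<theta> x))"
      by auto
    then show ?thesis
    proof
      assume "fun_poss q' (ts ! i)" then show ?thesis using i Cons by (auto simp: fun_poss_def)
    next
      assume "\<exists>q1 q2 x. q' = q1 @ q2 \<and> in_poss q1 (ts ! i) \<and> subt_at (ts ! i) q1 = Var x \<and> in_poss q2 (\<theta> x)"
      then obtain q1 q2 x where "q' = q1 @ q2 \<and> in_poss q1 (ts ! i) \<and> subt_at (ts ! i) q1 = Var x \<and> in_poss q2 (\<theta> x)" by blast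
      then show ?thesis using i Cons by (intro disjI2 exI[of _ "i # q1"] exI[of _ q2] exI[of _ x]) auto
    qed
  qed
qed

lemma nonlinear_steps:
  assumes "in_poss q1 l" "subt_at l q1 = Var x"
    and "\<And>y. (\<theta> y, \<theta>' y) \<in> (rstep E)\<^sup>*"
    and "\<theta>' x = replace_at (\<theta> x) q2 w" and "in_poss q2 (\<theta> x)"
  shows "(replace_at (l \<cdot> \<theta>) (q1 @ q2) w, l \<cdot> \<theta>') \<in> (rstep E)\<^sup>*"
  using assms(1,2)
proof (induction l arbitrary: q1)
  case (Var y)
  then have "q1 = []" "y = x" by (cases q1; auto)+
  then show ?case using assms by simp
next
  case (Fun f ts)
  then obtain i q1' where q1: "q1 = i # q1'" "i < length ts" "in_poss q1' (ts ! i)" "subt_at (ts ! i) q1' = Var x"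
    by (cases q1) auto
  have IH: "(replace_at (ts ! i \<cdot> \<theta>) (q1' @ q2) w, ts ! i \<cdot> \<theta>') \<in> (rstep E)\<^sup>*"
    using Fun.IH[of "ts ! i" q1'] q1 by auto
  have "(Fun f ([] @ (map (\<lambda>t. t \<cdot> \<theta>) ts)[i := replace_at (ts ! i \<cdot> \<theta>) (q1' @ q2) w]), Fun f ([] @ map (\<lambda>t. t \<cdot> \<theta>') ts)) \<in> (rstep E)\<^sup>*"
    by (rule args_steps) (use q1 IH in \<open>auto simp: nth_list_update intro: subst_steps assms(3)\<close>)
  then show ?case using q1 by simp
qed

lemma linear_Fun: "linear_term (Fun f ts) \<Longrightarrow> i < length ts \<Longrightarrow> linear_term (ts ! i)"
  unfolding linear_term_def
proof (intro allI impI)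
  fix p q x
  assume a: "\<forall>p q x. in_poss p (Fun f ts) \<and> in_poss q (Fun f ts) \<and> subt_at (Fun f ts) p = Var x \<and> subt_at (Fun f ts) q = Var x \<longrightarrow> p = q"
    "i < length ts" "in_poss p (ts ! i) \<and> in_poss q (ts ! i) \<and> subt_at (ts ! i) p = Var x \<and> subt_at (ts ! i) q = Var x"
  have "in_poss (i # p) (Fun f ts) \<and> in_poss (i # q) (Fun f ts) \<and> subt_at (Fun f ts) (i # p) = Var x \<and> subt_at (Fun f ts) (i # q) = Var x"
    using a(2,3) by simp
  then have "i # p = i # q" using a(1) by blast
  then show "p = q" by simp
qed

lemma linear_Fun_vars: "linear_term (Fun f ts) \<Longrightarrow> i < length ts \<Longrightarrow> j < length ts \<Longrightarrow> i \<noteq> j \<Longrightarrow>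
  in_poss q (ts ! i) \<Longrightarrow> subt_at (ts ! i) q = Var x \<Longrightarrow> x \<notin> vars_term (ts ! j)"
proof
  assume l: "linear_term (Fun f ts)" and *: "i < length ts" "j < length ts" "i \<noteq> j" "in_poss q (ts ! i)" "subt_at (ts ! i) q = Var x"
    and xj: "x \<in> vars_term (ts ! j)"
  obtain p where "in_poss p (ts ! j)" "subt_at (ts ! j) p = Var x" using vars_poss[OF xj] by blast
  with * have "in_poss (i # q) (Fun f ts) \<and> in_poss (j # p) (Fun f ts) \<and> subt_at (Fun f ts) (i # q) = Var x \<and> subt_at (Fun f ts) (j # p) = Var x"
    by simp
  with l have "i # q = j # p" unfolding linear_term_def by blast
  with * show False by simp
qed

lemma linear_replace:
  assumes "linear_term l" "in_poss q1 l" "subt_at l q1 = Var x" "in_poss q2 (\<theta> x)"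
  shows "replace_at (l \<cdot> \<theta>) (q1 @ q2) w = l \<cdot> (\<theta>(x := replace_at (\<theta> x) q2 w))"
  using assms(1-3)
proof (induction l arbitrary: q1)
  case (Var y)
  then have "q1 = []" "y = x" by (cases q1; auto)+
  then show ?case by simp
next
  case (Fun f ts)
  then obtain i q1' where q1: "q1 = i # q1'" "i < length ts" "in_poss q1' (ts ! i)" "subt_at (ts ! i) q1' = Var x"
    by (cases q1) auto
  have IH: "replace_at (ts ! i \<cdot> \<theta>) (q1' @ q2) w = ts ! i \<cdot> (\<theta>(x := replace_at (\<theta> x) q2 w))"
    using Fun.IH[OF nth_mem[OF q1(2)] linear_Fun[OF Fun.prems(1) q1(2)] q1(3) q1(4)] .
  have other: "ts ! j \<cdot> \<theta> = ts ! j \<cdot> (\<theta>(x := replace_at (\<theta> x) q2 w))" if "j < length ts" "j \<noteq> i" for j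
    by (rule subst_agree) (use linear_Fun_vars[OF Fun.prems(1) q1(2) that(1) that(2)[symmetric] q1(3,4)] in auto)
  let ?s = "\<theta>(x := replace_at (\<theta> x) q2 w)"
  have "(map (\<lambda>t. t \<cdot> \<theta>) ts)[i := replace_at (ts ! i \<cdot> \<theta>) (q1' @ q2) w] = map (\<lambda>t. t \<cdot> ?s) ts"
  proof (rule nth_equalityI)
    fix j assume "j < length ((map (\<lambda>t. t \<cdot> \<theta>) ts)[i := replace_at (ts ! i \<cdot> \<theta>) (q1' @ q2) w])"
    then show "(map (\<lambda>t. t \<cdot> \<theta>) ts)[i := replace_at (ts ! i \<cdot> \<theta>) (q1' @ q2) w] ! j = map (\<lambda>t. t \<cdot> ?s) ts ! j"
      using IH other[of j] by (cases "j = i") (simp_all add: nth_list_update)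
  qed simp
  moreover have "replace_at (Fun f ts \<cdot> \<theta>) (q1 @ q2) w = Fun f ((map (\<lambda>t. t \<cdot> \<theta>) ts)[i := replace_at (ts ! i \<cdot> \<theta>) (q1' @ q2) w])"
    using q1 by simp
  moreover have "Fun f ts \<cdot> ?s = Fun f (map (\<lambda>t. t \<cdot> ?s) ts)" by (simp only: subst_apply.simps)
  ultimately show ?case by (simp only:)
qed



primrec tsize :: "('f, 'v) term \<Rightarrow> nat" where
  "tsize (Var x) = 1"
| "tsize (Fun f ts) = Suc (sum_list (map tsize ts))"

lemma tsize_pos: "tsize t > 0" by (cases t) auto

lemma vars_subst: "vars_term (t \<cdot> \<sigma>) = (\<Union>y\<in>vars_term t. vars_term (\<sigma> y))"
  by (induction t) auto

lemma tsize_subst_var: "x \<in> vars_term t \<Longrightarrow> tsize (\<tau> x) \<le> tsize (t \<cdot> \<tau>) \<and> (t \<noteq> Var x \<longrightarrow> tsize (\<tau> x) < tsize (t \<cdot> \<tau>))"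
proof (induction t)
  case (Var y) then show ?case by simp
next
  case (Fun f ts)
  then obtain u where u: "u \<in> set ts" "x \<in> vars_term u" by auto
  with Fun.IH have "tsize (\<tau> x) \<le> tsize (u \<cdot> \<tau>)" by blast
  also have "tsize (u \<cdot> \<tau>) \<le> sum_list (map tsize (map (\<lambda>t. t \<cdot> \<tau>) ts))"
    by (rule member_le_sum_list) (use u in auto)
  finally show ?case by simp
qed

lemma occurs_no_unif: "x \<in> vars_term t \<Longrightarrow> t \<noteq> Var x \<Longrightarrow> \<tau> x \<noteq> t \<cdot> \<tau>"
proof
  assume "x \<in> vars_term t" "t \<noteq> Var x" and e: "\<tau> x = t \<cdot> \<tau>"
  then have "tsize (\<tau> x) < tsize (t \<cdot> \<tau>)" using tsize_subst_var[of x t \<tau>] by blast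
  then show False unfolding e by simp
qed

type_synonym ('f, 'v) eqs = "(('f, 'v) term \<times> ('f, 'v) term) list"

definition unifs :: "('v \<Rightarrow> ('f, 'v) term) \<Rightarrow> ('f, 'v) eqs \<Rightarrow> bool" where
  "unifs \<tau> E \<longleftrightarrow> (\<forall>(a, b) \<in> set E. a \<cdot> \<tau> = b \<cdot> \<tau>)"

definition veqs :: "('f, 'v) eqs \<Rightarrow> 'v set" where
  "veqs E = (\<Union>(a, b) \<in> set E. vars_term a \<union> vars_term b)"

definition seqs :: "('f, 'v) eqs \<Rightarrow> nat" where
  "seqs E = sum_list (map (\<lambda>(a, b). tsize a + tsize b) E)"

lemma finite_veqs: "finite (veqs E)"
  by (auto simp: veqs_def finite_vars)

lemma zip_facts:
  "length as = length bs \<Longrightarrow>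
   veqs (zip as bs) = (\<Union>a\<in>set as. vars_term a) \<union> (\<Union>b\<in>set bs. vars_term b) \<and>
   seqs (zip as bs) = sum_list (map tsize as) + sum_list (map tsize bs) \<and>
   (unifs \<tau> (zip as bs) \<longleftrightarrow> map (\<lambda>t. t \<cdot> \<tau>) as = map (\<lambda>t. t \<cdot> \<tau>) bs)"
proof (induction as arbitrary: bs)
  case Nil then show ?case by (simp add: veqs_def seqs_def unifs_def)
next
  case (Cons a as)
  then obtain b bs' where "bs = b # bs'" by (cases bs) auto
  with Cons show ?case by (auto simp: veqs_def seqs_def unifs_def)
qed

definition mgu_of :: "('v \<Rightarrow> ('f, 'v) term) \<Rightarrow> ('f, 'v) eqs \<Rightarrow> bool" where
  "mgu_of \<sigma> E \<longleftrightarrow> unifs \<sigma> E \<and> (\<forall>\<tau>. unifs \<tau> E \<longrightarrow> (\<exists>\<delta>. \<forall>x. \<tau> x = \<sigma> x \<cdot> \<delta>))"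

lemma subst_pointwise: "(\<forall>x. \<tau> x = \<sigma> x \<cdot> \<delta>) \<Longrightarrow> t \<cdot> \<tau> = t \<cdot> \<sigma> \<cdot> \<delta>"
  unfolding subst_compose by (rule subst_agree) simp

lemma elim_step:
  assumes x: "x \<notin> vars_term t" and \<rho>x: "\<rho> x = t" and \<rho>y: "\<And>y. y \<noteq> x \<Longrightarrow> \<rho> y = Var y"
    and rec: "mgu_of \<sigma>' (map (\<lambda>(c, d). (c \<cdot> \<rho>, d \<cdot> \<rho>)) E')"
    and sym: "(a = Var x \<and> b = t) \<or> (a = t \<and> b = Var x)"
  shows "mgu_of (\<lambda>y. \<rho> y \<cdot> \<sigma>') ((a, b) # E')"
proof -
  let ?\<sigma> = "\<lambda>y. \<rho> y \<cdot> \<sigma>'"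
  have tt: "t \<cdot> \<rho> = t"
  proof (rule trans[OF subst_agree subst_Var])
    fix y assume "y \<in> vars_term t" then have "y \<noteq> x" using x by blast
    then show "\<rho> y = Var y" by (rule \<rho>y)
  qed
  have comp: "c \<cdot> ?\<sigma> = c \<cdot> \<rho> \<cdot> \<sigma>'" for c by (simp add: subst_compose)
  have t1: "t \<cdot> ?\<sigma> = t \<cdot> \<sigma>'" by (simp only: comp tt)
  have t2: "Var x \<cdot> ?\<sigma> = t \<cdot> \<sigma>'" by (simp add: \<rho>x)
  have ab: "a \<cdot> ?\<sigma> = b \<cdot> ?\<sigma>" using sym t1 t2 by auto
  have E': "unifs ?\<sigma> E'" using rec unfolding mgu_of_def unifs_def by (fastforce simp: comp)
  have gen: "\<exists>\<delta>. \<forall>y. \<tau> y = ?\<sigma> y \<cdot> \<delta>" if u: "unifs \<tau> ((a, b) # E')" for \<tau>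
  proof -
    have tx: "\<tau> x = t \<cdot> \<tau>" using u sym by (auto simp: unifs_def)
    have ry: "\<rho> y \<cdot> \<tau> = \<tau> y" for y
      by (cases "y = x") (simp_all add: \<rho>x \<rho>y tx)
    have rt: "c \<cdot> \<rho> \<cdot> \<tau> = c \<cdot> \<tau>" for c
      by (simp only: subst_compose ry subst_Var)
    have "unifs \<tau> (map (\<lambda>(c, d). (c \<cdot> \<rho>, d \<cdot> \<rho>)) E')"
      using u unfolding unifs_def by (auto simp: rt)
    with rec obtain \<delta> where \<delta>: "\<forall>y. \<tau> y = \<sigma>' y \<cdot> \<delta>" unfolding mgu_of_def by blast
    have "\<tau> y = ?\<sigma> y \<cdot> \<delta>" for y
    proof -
      have "?\<sigma> y \<cdot> \<delta> = \<rho> y \<cdot> \<tau>" using subst_pointwise[OF \<delta>, of "\<rho> y"] by simp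
      also have "\<dots> = \<tau> y" by (rule ry)
      finally show ?thesis by simp
    qed
    then show ?thesis by blast
  qed
  show ?thesis unfolding mgu_of_def using ab E' gen by (auto simp: unifs_def)
qed

lemma mgu_exists: "unifs \<tau> E \<Longrightarrow> \<exists>\<sigma>. mgu_of \<sigma> E"
proof (induction E arbitrary: \<tau> rule: wf_induct[OF wf_inv_image[OF wf_lex_prod[OF wf_less_than wf_less_than]], of "\<lambda>E. (card (veqs E), seqs E)"])
  case (1 E)
  show ?case
  proof (cases E)
    case Nil
    have "mgu_of Var E" using Nil by (auto simp: mgu_of_def unifs_def)
    then show ?thesis by blast
  next
    case (Cons ab E')
    obtain a b where ab: "ab = (a, b)" by (cases ab)
    have ab_u: "a \<cdot> \<tau> = b \<cdot> \<tau>" and E'_u: "unifs \<tau> E'" using 1(2) Cons ab by (auto simp: unifs_def)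
    show ?thesis
    proof (cases "a = b")
      case True
      have less: "((card (veqs E'), seqs E'), (card (veqs E), seqs E)) \<in> less_than <*lex*> less_than"
      proof -
        have "veqs E' \<subseteq> veqs E" using Cons by (auto simp: veqs_def)
        then have "card (veqs E') \<le> card (veqs E)" by (simp add: card_mono finite_veqs)
        moreover have "seqs E' < seqs E" using Cons ab tsize_pos[of a] by (simp add: seqs_def)
        ultimately show ?thesis by auto
      qed
      obtain \<sigma> where "mgu_of \<sigma> E'" using 1(1)[rule_format, of E'] less E'_u by auto
      then have "mgu_of \<sigma> E" using Cons ab True by (auto simp: mgu_of_def unifs_def)
      then show ?thesis by blast
    next
      case False
      show ?thesis
      proof (cases "\<exists>x t. (a = Var x \<and> b = t) \<or> (a = t \<and> b = Var x)")
        case True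
        then obtain x t where sym: "(a = Var x \<and> b = t) \<or> (a = t \<and> b = Var x)" by blast
        have txx: "t \<noteq> Var x" using sym False by auto
        have tx: "\<tau> x = t \<cdot> \<tau>" using sym ab_u by auto
        have x: "x \<notin> vars_term t" using occurs_no_unif[OF _ txx] tx by blast
        let ?\<rho> = "Var(x := t)"
        let ?E = "map (\<lambda>(c, d). (c \<cdot> ?\<rho>, d \<cdot> ?\<rho>)) E'"
        have rt: "c \<cdot> ?\<rho> \<cdot> \<tau> = c \<cdot> \<tau>" for c
          by (simp add: subst_compose) (rule subst_agree, use tx in auto)
        have uE: "unifs \<tau> ?E" using E'_u by (auto simp: unifs_def rt)
        have vsub: "vars_term (c \<cdot> ?\<rho>) \<subseteq> (vars_term c - {x}) \<union> vars_term t" for c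
          by (auto simp: vars_subst split: if_splits)
        have "veqs ?E \<subseteq> veqs E - {x}"
        proof
          fix y assume "y \<in> veqs ?E"
          then obtain c d where cd: "(c, d) \<in> set E'" "y \<in> vars_term (c \<cdot> ?\<rho>) \<union> vars_term (d \<cdot> ?\<rho>)"
            by (auto simp: veqs_def)
          then have "y \<in> (vars_term c - {x}) \<union> vars_term t \<union> ((vars_term d - {x}) \<union> vars_term t)"
            using vsub[of c] vsub[of d] by blast
          moreover have "vars_term t \<subseteq> veqs E" using sym Cons ab by (auto simp: veqs_def)
          ultimately show "y \<in> veqs E - {x}" using cd(1) x Cons by (auto simp: veqs_def)
        qed
        moreover have "x \<in> veqs E" using sym Cons ab by (auto simp: veqs_def)
        ultimately have "veqs ?E \<subset> veqs E" by blast
        then have "card (veqs ?E) < card (veqs E)" by (rule psubset_card_mono[OF finite_veqs])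
        then obtain \<sigma>' where \<sigma>': "mgu_of \<sigma>' ?E" using 1(1)[rule_format, of ?E] uE by auto
        have "mgu_of (\<lambda>y. ?\<rho> y \<cdot> \<sigma>') ((a, b) # E')"
          by (rule elim_step[OF x _ _ \<sigma>' sym]) simp_all
        with Cons ab show ?thesis by blast
      next
        case nv: False
        then obtain f as g bs where fa: "a = Fun f as" "b = Fun g bs" by (cases a; cases b) auto
        have fg: "f = g" "length as = length bs" using ab_u fa map_eq_imp_length_eq by auto
        let ?E = "zip as bs @ E'"
        note zf = zip_facts[OF fg(2)]
        have uE: "unifs \<tau> ?E" using zf ab_u fa E'_u by (auto simp: unifs_def)
        have "veqs ?E \<subseteq> veqs E" using zf Cons ab fa by (auto simp: veqs_def)
        then have "card (veqs ?E) \<le> card (veqs E)" by (simp add: card_mono finite_veqs)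
        moreover have "seqs ?E < seqs E" using zf Cons ab fa by (simp add: seqs_def)
        ultimately have "((card (veqs ?E), seqs ?E), (card (veqs E), seqs E)) \<in> less_than <*lex*> less_than"
          by auto
        then obtain \<sigma> where \<sigma>: "mgu_of \<sigma> ?E" using 1(1)[rule_format, of ?E] uE by auto
        have eq: "unifs \<rho> E \<longleftrightarrow> unifs \<rho> ?E" for \<rho>
          using zip_facts[OF fg(2), of \<rho>] Cons ab fa fg by (auto simp: unifs_def)
        from \<sigma> have "mgu_of \<sigma> E" unfolding mgu_of_def eq .
        then show ?thesis by blast
      qed
    qed
  qed
qed

lemma is_mgu_exists: "s \<cdot> \<tau> = t \<cdot> \<tau> \<Longrightarrow> \<exists>\<sigma>. is_mgu \<sigma> s t"
proof -
  assume "s \<cdot> \<tau> = t \<cdot> \<tau>"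
  then have "unifs \<tau> [(s, t)]" by (simp add: unifs_def)
  then obtain \<sigma> where "mgu_of \<sigma> [(s, t)]" using mgu_exists by blast
  then show ?thesis unfolding is_mgu_def mgu_of_def unifs_def by auto
qed

lemma rename_apart:
  assumes inf: "infinite (UNIV :: 'v set)" and fA: "finite (A :: 'v set)" and fV: "finite (V :: 'v set)"
  shows "\<exists>\<pi>. bij \<pi> \<and> \<pi> ` A \<inter> V = {}"
proof -
  have "infinite (UNIV - (A \<union> V))" using inf fA fV by auto
  then obtain B where B: "finite B" "card B = card A" "B \<subseteq> UNIV - (A \<union> V)"
    using infinite_arbitrarily_large by blast
  then obtain g where g: "bij_betw g A B" using finite_same_card_bij[OF fA B(1)] by metis
  define \<pi> where "\<pi> x = (if x \<in> A then g x else if x \<in> B then inv_into A g x else x)" for x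
  have AB: "A \<inter> B = {}" using B by auto
  have inv: "\<pi> (\<pi> x) = x" for x
  proof -
    consider "x \<in> A" | "x \<in> B" | "x \<notin> A" "x \<notin> B" by blast
    then show ?thesis
    proof cases
      case 1
      then have "g x \<in> B" using g by (auto simp: bij_betw_def)
      then show ?thesis using 1 AB g unfolding \<pi>_def by (auto simp: bij_betw_def)
    next
      case 2
      then have "inv_into A g x \<in> A" using g by (metis bij_betw_def inv_into_into)
      then show ?thesis using 2 AB g unfolding \<pi>_def by (auto simp: bij_betw_def f_inv_into_f)
    next
      case 3 then show ?thesis unfolding \<pi>_def by auto
    qed
  qed
  have "\<pi> ` A \<subseteq> B" using g unfolding \<pi>_def by (auto simp: bij_betw_def)
  then have "\<pi> ` A \<inter> V = {}" using B by auto
  then show ?thesis using involuntory_imp_bij[OF inv] by blast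
qed

lemma vars_rename: "vars_term (t \<cdot> (Var \<circ> \<pi>)) = \<pi> ` vars_term t"
  by (induction t) auto



lemma rstep_mono: "E \<subseteq> F \<Longrightarrow> rstep E \<subseteq> rstep F"
  unfolding rstep_def by blast

lemma rstep_swap: "(s, t) \<in> rstep E \<Longrightarrow> (t, s) \<in> rstep {(r, l). (l, r) \<in> E}"
proof (elim rstepE)
  fix l r p \<sigma> assume *: "(l, r) \<in> E" "in_poss p s" "subt_at s p = l \<cdot> \<sigma>" "t = replace_at s p (r \<cdot> \<sigma>)"
  have "s = replace_at s p (l \<cdot> \<sigma>)" using replace_at_id[OF *(2)] *(3) by simp
  then show ?thesis
    by (intro rstepI[of r l _ p _ \<sigma>]) (use * in \<open>auto simp: in_poss_replace_at subt_at_replace_at replace_at_replace_at\<close>)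
qed

lemma sym_step_eq: "sym_step B = rstep (sym_es B)"
proof
  show "sym_step B \<subseteq> rstep (sym_es B)"
  proof
    fix x assume "x \<in> sym_step B"
    then show "x \<in> rstep (sym_es B)" unfolding sym_step_def
    proof
      assume "x \<in> rstep B" then show ?thesis using rstep_mono[of B "sym_es B"] by (auto simp: sym_es_def)
    next
      assume "x \<in> (rstep B)\<inverse>"
      then obtain a b where x: "x = (a, b)" "(b, a) \<in> rstep B" by auto
      then have "(a, b) \<in> rstep {(r, l). (l, r) \<in> B}" by (simp add: rstep_swap)
      then show ?thesis using rstep_mono[of "{(r, l). (l, r) \<in> B}" "sym_es B"] x by (auto simp: sym_es_def)
    qed
  qed
next
  show "rstep (sym_es B) \<subseteq> sym_step B"
  proof
    fix x assume "x \<in> rstep (sym_es B)"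
    then obtain a b l r p \<sigma> where x: "x = (a, b)" "(l, r) \<in> sym_es B" "in_poss p a" "subt_at a p = l \<cdot> \<sigma>" "b = replace_at a p (r \<cdot> \<sigma>)"
      unfolding rstep_def by blast
    show "x \<in> sym_step B"
    proof (cases "(l, r) \<in> B")
      case True
      then have "(a, b) \<in> rstep B" using x by (intro rstepI) auto
      then show ?thesis using x by (simp add: sym_step_def)
    next
      case False
      then have "(r, l) \<in> B" using x by (auto simp: sym_es_def)
      then have "(l, r) \<in> {(x, y). (y, x) \<in> B}" by simp
      then have "(a, b) \<in> rstep {(x, y). (y, x) \<in> B}" using x by (intro rstepI) auto
      then have "(b, a) \<in> rstep {(r, l). (l, r) \<in> {(x, y). (y, x) \<in> B}}" by (rule rstep_swap)
      moreover have "{(r, l). (l, r) \<in> {(x, y). (y, x) \<in> B}} = B" by auto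
      ultimately show ?thesis using x by (simp add: sym_step_def)
    qed
  qed
qed

lemma sym_step_sym: "(a, b) \<in> sym_step E \<Longrightarrow> (b, a) \<in> sym_step E"
  by (auto simp: sym_step_def)

lemma sym_step_rtrancl_sym: "(a, b) \<in> (sym_step E)\<^sup>* \<Longrightarrow> (b, a) \<in> (sym_step E)\<^sup>*"
proof (induction rule: rtrancl_induct)
  case (step b c)
  then show ?case by (meson converse_rtrancl_into_rtrancl sym_step_sym)
qed simp

lemma NF_subst: "a \<cdot> \<delta> \<in> NF R \<Longrightarrow> a \<in> NF R"
  unfolding NF_def using rstep_subst by blast

lemma vars_subt: "in_poss q t \<Longrightarrow> vars_term (subt_at t q) \<subseteq> vars_term t"
  by (induction q arbitrary: t) (fastforce split: term.splits)+

lemma in_poss_Var[simp]: "in_poss q (Var x) \<longleftrightarrow> q = []" by (cases q) auto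

lemma innermost:
  "in_poss q0 a \<Longrightarrow> subt_at a q0 \<notin> NF R \<Longrightarrow>
   \<exists>q. in_poss q a \<and> subt_at a q \<notin> NF R \<and> (\<forall>q'. in_poss q' (subt_at a q) \<and> q' \<noteq> [] \<longrightarrow> subt_at (subt_at a q) q' \<in> NF R)"
proof (induction a arbitrary: q0)
  case (Var x)
  then show ?case by (intro exI[of _ "[]"]) (cases q0; auto)
next
  case (Fun f ts)
  show ?case
  proof (cases "\<exists>i q'. i < length ts \<and> in_poss q' (ts ! i) \<and> subt_at (ts ! i) q' \<notin> NF R")
    case True
    then obtain i q' where i: "i < length ts" "in_poss q' (ts ! i)" "subt_at (ts ! i) q' \<notin> NF R" by blast
    from Fun.IH[OF nth_mem[OF i(1)] i(2,3)] obtain q where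
      "in_poss q (ts ! i) \<and> subt_at (ts ! i) q \<notin> NF R \<and> (\<forall>q'. in_poss q' (subt_at (ts ! i) q) \<and> q' \<noteq> [] \<longrightarrow> subt_at (subt_at (ts ! i) q) q' \<in> NF R)"
      by blast
    then show ?thesis using i by (intro exI[of _ "i # q"]) auto
  next
    case False
    then have "q0 = []" using Fun.prems by (cases q0) auto
    show ?thesis
    proof (intro exI[of _ "[]"] conjI allI impI)
      show "subt_at (Fun f ts) [] \<notin> NF R" using Fun.prems \<open>q0 = []\<close> by simp
      fix q' assume "in_poss q' (subt_at (Fun f ts) []) \<and> q' \<noteq> []"
      then obtain i q'' where "q' = i # q''" "i < length ts" "in_poss q'' (ts ! i)" by (cases q') auto
      with False show "subt_at (subt_at (Fun f ts) []) q' \<in> NF R" by auto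
    qed simp
  qed
qed

lemma root_redex:
  assumes "a \<notin> NF R" and "\<forall>q'. in_poss q' a \<and> q' \<noteq> [] \<longrightarrow> subt_at a q' \<in> NF R"
  shows "\<exists>l r \<theta>. (l, r) \<in> R \<and> a = l \<cdot> \<theta>"
proof -
  from assms(1) obtain u where "(a, u) \<in> rstep R" by (auto simp: NF_def)
  then obtain l r p \<sigma> where *: "(l, r) \<in> R" "in_poss p a" "subt_at a p = l \<cdot> \<sigma>" by (auto elim: rstepE)
  show ?thesis
  proof (cases "p = []")
    case True then show ?thesis using * by auto
  next
    case False
    have "(l \<cdot> \<sigma>, r \<cdot> \<sigma>) \<in> rstep R" using *(1) by (rule rstep_root)
    then have "subt_at a p \<notin> NF R" using *(3) by (auto simp: NF_def)
    with assms(2) *(2) False show ?thesis by blast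
  qed
qed

lemma bij_inv_f: "bij \<pi> \<Longrightarrow> inv \<pi> (\<pi> y) = y"
  by (simp add: bij_def)

lemma CP:
  fixes R R1 R2 :: "('f, 'v) rule set"
  assumes inf: "infinite (UNIV :: 'v set)"
    and r1: "(l1, r1) \<in> R1" and r2: "(l2, r2) \<in> R2"
    and vr2: "vars_term r2 \<subseteq> vars_term l2"
    and fp: "fun_poss q l2"
    and eq: "subt_at l2 q \<cdot> \<theta>2 = l1 \<cdot> \<theta>1"
    and prime: "\<forall>q'. in_poss q' (l1 \<cdot> \<theta>1) \<and> q' \<noteq> [] \<longrightarrow> subt_at (l1 \<cdot> \<theta>1) q' \<in> NF R"
  shows "replace_at (l2 \<cdot> \<theta>2) q (r1 \<cdot> \<theta>1) = r2 \<cdot> \<theta>2 \<or>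
         (replace_at (l2 \<cdot> \<theta>2) q (r1 \<cdot> \<theta>1), r2 \<cdot> \<theta>2) \<in> rstep (PCP_gen R R1 R2)"
proof -
  have qp: "in_poss q l2" using fp by (simp add: fun_poss_def)
  let ?A = "vars_rule (l1, r1)" and ?V = "vars_rule (l2, r2)"
  obtain \<pi> where \<pi>: "bij \<pi>" "\<pi> ` ?A \<inter> ?V = {}"
    using rename_apart[OF inf, of ?A ?V] by (auto simp: vars_rule_def finite_vars)
  define l1' where "l1' = l1 \<cdot> (Var \<circ> \<pi>)"
  define r1' where "r1' = r1 \<cdot> (Var \<circ> \<pi>)"
  define \<theta> where "\<theta> y = (if y \<in> \<pi> ` ?A then \<theta>1 (inv \<pi> y) else \<theta>2 y)" for y
  have var1: "is_variant (l1', r1') (l1, r1)" using \<pi>(1) by (auto simp: is_variant_def l1'_def r1'_def)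
  have var2: "is_variant (l2, r2) (l2, r2)"
    by (auto simp: is_variant_def intro!: exI[of _ id] simp: subst_Var comp_def)
  have vr1': "vars_rule (l1', r1') = \<pi> ` ?A" by (auto simp: vars_rule_def l1'_def r1'_def vars_rename)
  have disj: "vars_rule (l1', r1') \<inter> ?V = {}" using vr1' \<pi>(2) by simp
  have th1: "t \<cdot> (Var \<circ> \<pi>) \<cdot> \<theta> = t \<cdot> \<theta>1" if "vars_term t \<subseteq> ?A" for t
    unfolding subst_compose
  proof (rule subst_agree)
    fix y assume "y \<in> vars_term t"
    then have "y \<in> ?A" using that by blast
    then show "(Var \<circ> \<pi>) y \<cdot> \<theta> = \<theta>1 y" by (simp add: \<theta>_def bij_inv_f[OF \<pi>(1)])
  qed
  have l1\<theta>: "l1' \<cdot> \<theta> = l1 \<cdot> \<theta>1" unfolding l1'_def by (rule th1) (auto simp: vars_rule_def)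
  have r1\<theta>: "r1' \<cdot> \<theta> = r1 \<cdot> \<theta>1" unfolding r1'_def by (rule th1) (auto simp: vars_rule_def)
  have th2: "t \<cdot> \<theta> = t \<cdot> \<theta>2" if "vars_term t \<subseteq> ?V" for t
  proof (rule subst_agree)
    fix y assume "y \<in> vars_term t"
    then have "y \<in> ?V" using that by blast
    then have "y \<notin> \<pi> ` ?A" using \<pi>(2) by blast
    then show "\<theta> y = \<theta>2 y" by (simp add: \<theta>_def)
  qed
  have l2\<theta>: "l2 \<cdot> \<theta> = l2 \<cdot> \<theta>2" by (rule th2) (auto simp: vars_rule_def)
  have r2\<theta>: "r2 \<cdot> \<theta> = r2 \<cdot> \<theta>2" by (rule th2) (auto simp: vars_rule_def)
  have l2q\<theta>: "subt_at l2 q \<cdot> \<theta> = subt_at l2 q \<cdot> \<theta>2"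
    by (rule th2) (use vars_subt[OF qp] in \<open>auto simp: vars_rule_def\<close>)
  have unif: "l1' \<cdot> \<theta> = subt_at l2 q \<cdot> \<theta>" using l1\<theta> l2q\<theta> eq by simp
  show ?thesis
  proof (cases "q = [] \<and> is_variant (l1', r1') (l2, r2)")
    case True
    then obtain \<pi>' where \<pi>': "l1' = l2 \<cdot> (Var \<circ> \<pi>')" "r1' = r2 \<cdot> (Var \<circ> \<pi>')" by (auto simp: is_variant_def)
    have "l2 \<cdot> (\<lambda>y. (Var \<circ> \<pi>') y \<cdot> \<theta>) = l2 \<cdot> \<theta>" using unif True \<pi>'(1) by (simp add: subst_compose)
    then have ag: "(Var \<circ> \<pi>') y \<cdot> \<theta> = \<theta> y" if "y \<in> vars_term l2" for y using subst_agree_rev that by metis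
    have "r2 \<cdot> (\<lambda>y. (Var \<circ> \<pi>') y \<cdot> \<theta>) = r2 \<cdot> \<theta>" by (rule subst_agree) (use ag vr2 in blast)
    then have "r1' \<cdot> \<theta> = r2 \<cdot> \<theta>" using \<pi>'(2) by (simp add: subst_compose)
    then show ?thesis using True r1\<theta> r2\<theta> by simp
  next
    case False
    obtain \<sigma> where mgu: "is_mgu \<sigma> l1' (subt_at l2 q)" using is_mgu_exists[OF unif] by blast
    then obtain \<delta> where \<delta>: "\<forall>x. \<theta> x = \<sigma> x \<cdot> \<delta>" unfolding is_mgu_def using unif by blast
    have ov: "overlap R1 R2 (l1', r1') q (l2, r2)"
      unfolding overlap_def using r1 r2 var1 var2 disj fp unif False by auto
    have pr: "\<forall>q'. in_poss q' (l1' \<cdot> \<sigma>) \<and> q' \<noteq> [] \<longrightarrow> subt_at (l1' \<cdot> \<sigma>) q' \<in> NF R"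
    proof (intro allI impI)
      fix q' assume q': "in_poss q' (l1' \<cdot> \<sigma>) \<and> q' \<noteq> []"
      have e: "l1' \<cdot> \<sigma> \<cdot> \<delta> = l1 \<cdot> \<theta>1" using subst_pointwise[OF \<delta>, of l1'] l1\<theta> by simp
      have "in_poss q' (l1 \<cdot> \<theta>1)" using in_poss_subst[of q' "l1' \<cdot> \<sigma>" \<delta>] q' e by simp
      then have "subt_at (l1 \<cdot> \<theta>1) q' \<in> NF R" using prime q' by blast
      then have "subt_at (l1' \<cdot> \<sigma>) q' \<cdot> \<delta> \<in> NF R" using subt_at_subst[of q' "l1' \<cdot> \<sigma>" \<delta>] q' e by simp
      then show "subt_at (l1' \<cdot> \<sigma>) q' \<in> NF R" by (rule NF_subst)
    qed
    have mem: "(replace_at (l2 \<cdot> \<sigma>) q (r1' \<cdot> \<sigma>), r2 \<cdot> \<sigma>) \<in> PCP_gen R R1 R2"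
      unfolding PCP_gen_def using ov mgu pr
      by (intro CollectI exI[of _ "(l1', r1')"] exI[of _ q] exI[of _ "(l2, r2)"] exI[of _ \<sigma>]) auto
    have "(replace_at (l2 \<cdot> \<sigma>) q (r1' \<cdot> \<sigma>) \<cdot> \<delta>, r2 \<cdot> \<sigma> \<cdot> \<delta>) \<in> rstep (PCP_gen R R1 R2)"
      by (rule rstep_root[OF mem])
    moreover have "replace_at (l2 \<cdot> \<sigma>) q (r1' \<cdot> \<sigma>) \<cdot> \<delta> = replace_at (l2 \<cdot> \<theta>2) q (r1 \<cdot> \<theta>1)"
      using replace_at_subst[OF in_poss_subst[OF qp], of \<sigma> "r1' \<cdot> \<sigma>" \<delta>]
        subst_pointwise[OF \<delta>, of l2] subst_pointwise[OF \<delta>, of r1'] l2\<theta> r1\<theta> by simp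
    moreover have "r2 \<cdot> \<sigma> \<cdot> \<delta> = r2 \<cdot> \<theta>2" using subst_pointwise[OF \<delta>, of r2] r2\<theta> by simp
    ultimately show ?thesis by simp
  qed
qed



lemma step_at: "(l, r) \<in> E \<Longrightarrow> in_poss p s \<Longrightarrow> (replace_at s p (l \<cdot> \<theta>), replace_at s p (r \<cdot> \<theta>)) \<in> rstep E"
  by (rule rstep_ctx[OF rstep_root])

lemma var_sub: "in_poss q1 l \<Longrightarrow> subt_at l q1 = Var x \<Longrightarrow> subt_at (l \<cdot> \<theta>) (q1 @ q2) = subt_at (\<theta> x) q2"
  by (simp add: subt_at_append in_poss_subst subt_at_subst)

lemma var_case:
  assumes p: "in_poss p s" and sp: "subt_at s p = l \<cdot> \<theta>"
    and q1: "in_poss q1 l" and lx: "subt_at l q1 = Var x" and q2: "in_poss q2 (\<theta> x)"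
    and red: "subt_at (\<theta> x) q2 = li \<cdot> \<theta>i" and ri: "(li, ri) \<in> R"
  obtains \<theta>' where "(replace_at s (p @ q1 @ q2) (ri \<cdot> \<theta>i), replace_at s p (l \<cdot> \<theta>')) \<in> (rstep R)\<^sup>*"
    and "\<And>r. (replace_at s p (r \<cdot> \<theta>), replace_at s p (r \<cdot> \<theta>')) \<in> (rstep R)\<^sup>*"
proof -
  define \<theta>' where "\<theta>' = \<theta>(x := replace_at (\<theta> x) q2 (ri \<cdot> \<theta>i))"
  have sx: "(\<theta> x, \<theta>' x) \<in> rstep R" unfolding \<theta>'_def using ri q2 red by (auto intro: rstepI)
  have all: "(\<theta> y, \<theta>' y) \<in> (rstep R)\<^sup>*" for y
    using sx by (cases "y = x") (auto simp: \<theta>'_def)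
  have "(replace_at (l \<cdot> \<theta>) (q1 @ q2) (ri \<cdot> \<theta>i), l \<cdot> \<theta>') \<in> (rstep R)\<^sup>*"
    by (rule nonlinear_steps[OF q1 lx all]) (simp_all add: \<theta>'_def q2)
  from rsteps_ctx[OF this p] have 1: "(replace_at s (p @ q1 @ q2) (ri \<cdot> \<theta>i), replace_at s p (l \<cdot> \<theta>')) \<in> (rstep R)\<^sup>*"
    using replace_at_append[OF p, of "q1 @ q2"] sp by simp
  have 2: "(replace_at s p (r \<cdot> \<theta>), replace_at s p (r \<cdot> \<theta>')) \<in> (rstep R)\<^sup>*" for r
    by (rule rsteps_ctx[OF subst_steps p]) (rule all)
  show ?thesis using that 1 2 by blast
qed

lemma CP_ctx:
  fixes R R1 R2 :: "('f, 'v) rule set"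
  assumes inf: "infinite (UNIV :: 'v set)"
    and r1: "(l1, r1) \<in> R1" and r2: "(l2, r2) \<in> R2"
    and vr2: "vars_term r2 \<subseteq> vars_term l2"
    and p: "in_poss p s" and sp: "subt_at s p = l2 \<cdot> \<theta>2"
    and fp: "fun_poss q l2"
    and sq: "subt_at (l2 \<cdot> \<theta>2) q = l1 \<cdot> \<theta>1"
    and prime: "\<forall>q'. in_poss q' (l1 \<cdot> \<theta>1) \<and> q' \<noteq> [] \<longrightarrow> subt_at (l1 \<cdot> \<theta>1) q' \<in> NF R"
  shows "replace_at s (p @ q) (r1 \<cdot> \<theta>1) = replace_at s p (r2 \<cdot> \<theta>2) \<or>
         (replace_at s (p @ q) (r1 \<cdot> \<theta>1), replace_at s p (r2 \<cdot> \<theta>2)) \<in> rstep (PCP_gen R R1 R2)"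
proof -
  have qp: "in_poss q l2" using fp by (simp add: fun_poss_def)
  have eq: "subt_at l2 q \<cdot> \<theta>2 = l1 \<cdot> \<theta>1" using sq subt_at_subst[OF qp] by simp
  have e: "replace_at s (p @ q) (r1 \<cdot> \<theta>1) = replace_at s p (replace_at (l2 \<cdot> \<theta>2) q (r1 \<cdot> \<theta>1))"
    using replace_at_append[OF p] sp by simp
  from CP[OF inf r1 r2 vr2 fp eq prime] show ?thesis
    unfolding e by (auto intro: rstep_ctx[OF _ p])
qed

lemma par_peak:
  assumes par: "par p1 p2" and p1: "in_poss p1 s" and p2: "in_poss p2 s"
    and s1: "subt_at s p1 = l1 \<cdot> \<theta>1" and s2: "subt_at s p2 = l2 \<cdot> \<theta>2"
    and r1: "(l1, r1) \<in> E1" and r2: "(l2, r2) \<in> E2"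
  shows "\<exists>w. (replace_at s p1 (r1 \<cdot> \<theta>1), w) \<in> rstep E2 \<and> (replace_at s p2 (r2 \<cdot> \<theta>2), w) \<in> rstep E1"
proof -
  note a = par_replace[OF par p1 p2, of "r1 \<cdot> \<theta>1" "r2 \<cdot> \<theta>2"]
  note b = par_replace[OF par_sym[OF par] p2 p1, of "r2 \<cdot> \<theta>2" "r1 \<cdot> \<theta>1"]
  let ?w = "replace_at (replace_at s p1 (r1 \<cdot> \<theta>1)) p2 (r2 \<cdot> \<theta>2)"
  have "(replace_at s p1 (r1 \<cdot> \<theta>1), ?w) \<in> rstep E2"
    by (rule rstepI[OF r2]) (use a s2 in auto)
  moreover have "(replace_at s p2 (r2 \<cdot> \<theta>2), ?w) \<in> rstep E1"
    by (rule rstepI[OF r1]) (use a b s1 in auto)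
  ultimately show ?thesis by blast
qed

lemma wf_trs_vars: "wf_trs R \<Longrightarrow> (l, r) \<in> R \<Longrightarrow> vars_term r \<subseteq> vars_term l"
  unfolding wf_trs_def by auto

lemma sym_es_vars: "var_balanced B \<Longrightarrow> (l, r) \<in> sym_es B \<Longrightarrow> vars_term r \<subseteq> vars_term l"
  unfolding var_balanced_def sym_es_def by auto

lemma PrimeRR:
  fixes R :: "('f, 'v) rule set"
  assumes inf: "infinite (UNIV :: 'v set)" and trs: "wf_trs R"
    and ro: "(lo, ro) \<in> R" and p: "in_poss p s" and sp: "subt_at s p = lo \<cdot> \<theta>o"
    and q: "in_poss q (lo \<cdot> \<theta>o)" and sq: "subt_at (lo \<cdot> \<theta>o) q = li \<cdot> \<theta>i" and ri: "(li, ri) \<in> R"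
    and prime: "\<forall>q'. in_poss q' (li \<cdot> \<theta>i) \<and> q' \<noteq> [] \<longrightarrow> subt_at (li \<cdot> \<theta>i) q' \<in> NF R"
  shows "joinable R (replace_at s (p @ q) (ri \<cdot> \<theta>i)) (replace_at s p (ro \<cdot> \<theta>o)) \<or>
         (replace_at s (p @ q) (ri \<cdot> \<theta>i), replace_at s p (ro \<cdot> \<theta>o)) \<in> sym_step (PCP R)"
proof (cases "fun_poss q lo")
  case True
  from CP_ctx[OF inf ri ro wf_trs_vars[OF trs ro] p sp True sq prime]
  show ?thesis
  proof
    assume e: "replace_at s (p @ q) (ri \<cdot> \<theta>i) = replace_at s p (ro \<cdot> \<theta>o)"
    show ?thesis unfolding joinable_def e by (intro disjI1 exI[of _ "replace_at s p (ro \<cdot> \<theta>o)"] conjI rtrancl.rtrancl_refl)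
  next
    assume "(replace_at s (p @ q) (ri \<cdot> \<theta>i), replace_at s p (ro \<cdot> \<theta>o)) \<in> rstep (PCP_gen R R R)"
    then show ?thesis unfolding PCP_def sym_step_def by (intro disjI2 UnI1)
  qed
next
  case False
  then obtain q1 q2 x where d: "q = q1 @ q2" "in_poss q1 lo" "subt_at lo q1 = Var x" "in_poss q2 (\<theta>o x)"
    using poss_decomp[OF q] by blast
  have red: "subt_at (\<theta>o x) q2 = li \<cdot> \<theta>i" using sq var_sub[OF d(2,3)] d(1) by simp
  obtain \<theta>' where 1: "(replace_at s (p @ q1 @ q2) (ri \<cdot> \<theta>i), replace_at s p (lo \<cdot> \<theta>')) \<in> (rstep R)\<^sup>*"
    and 2: "\<And>r. (replace_at s p (r \<cdot> \<theta>o), replace_at s p (r \<cdot> \<theta>')) \<in> (rstep R)\<^sup>*"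
    using var_case[OF p sp d(2,3,4) red ri] by blast
  have "(replace_at s p (lo \<cdot> \<theta>'), replace_at s p (ro \<cdot> \<theta>')) \<in> rstep R" by (rule step_at[OF ro p])
  with 1 have j: "(replace_at s (p @ q) (ri \<cdot> \<theta>i), replace_at s p (ro \<cdot> \<theta>')) \<in> (rstep R)\<^sup>*"
    unfolding d(1) by (rule rtrancl_into_rtrancl)
  show ?thesis unfolding joinable_def by (intro disjI1 exI[of _ "replace_at s p (ro \<cdot> \<theta>')"] conjI j 2)
qed

lemma PrimeRB:
  fixes R B :: "('f, 'v) rule set"
  assumes inf: "infinite (UNIV :: 'v set)" and bal: "var_balanced B"
    and ro: "(lo, ro) \<in> sym_es B" and p: "in_poss p s" and sp: "subt_at s p = lo \<cdot> \<theta>o"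
    and q: "in_poss q (lo \<cdot> \<theta>o)" and sq: "subt_at (lo \<cdot> \<theta>o) q = li \<cdot> \<theta>i" and ri: "(li, ri) \<in> R"
    and prime: "\<forall>q'. in_poss q' (li \<cdot> \<theta>i) \<and> q' \<noteq> [] \<longrightarrow> subt_at (li \<cdot> \<theta>i) q' \<in> NF R"
  shows "joinable_mod R B (replace_at s (p @ q) (ri \<cdot> \<theta>i)) (replace_at s p (ro \<cdot> \<theta>o)) \<or>
         (replace_at s (p @ q) (ri \<cdot> \<theta>i), replace_at s p (ro \<cdot> \<theta>o)) \<in> sym_step (PCP_pm R B)"
proof (cases "fun_poss q lo")
  case True
  from CP_ctx[OF inf ri ro sym_es_vars[OF bal ro] p sp True sq prime]
  have "replace_at s (p @ q) (ri \<cdot> \<theta>i) = replace_at s p (ro \<cdot> \<theta>o) \<or>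
        (replace_at s (p @ q) (ri \<cdot> \<theta>i), replace_at s p (ro \<cdot> \<theta>o)) \<in> rstep (PCP_pm R B)"
    using rstep_mono[of "PCP_gen R R (sym_es B)" "PCP_pm R B"] by (auto simp: PCP_pm_def)
  then show ?thesis
  proof
    assume e: "replace_at s (p @ q) (ri \<cdot> \<theta>i) = replace_at s p (ro \<cdot> \<theta>o)"
    show ?thesis unfolding joinable_mod_def e
      by (intro disjI1 exI[of _ "replace_at s p (ro \<cdot> \<theta>o)"] exI[of _ "replace_at s p (ro \<cdot> \<theta>o)"] conjI rtrancl.rtrancl_refl)
  next
    assume "(replace_at s (p @ q) (ri \<cdot> \<theta>i), replace_at s p (ro \<cdot> \<theta>o)) \<in> rstep (PCP_pm R B)"
    then show ?thesis unfolding sym_step_def by (intro disjI2 UnI1)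
  qed
next
  case False
  then obtain q1 q2 x where d: "q = q1 @ q2" "in_poss q1 lo" "subt_at lo q1 = Var x" "in_poss q2 (\<theta>o x)"
    using poss_decomp[OF q] by blast
  have red: "subt_at (\<theta>o x) q2 = li \<cdot> \<theta>i" using sq var_sub[OF d(2,3)] d(1) by simp
  obtain \<theta>' where 1: "(replace_at s (p @ q1 @ q2) (ri \<cdot> \<theta>i), replace_at s p (lo \<cdot> \<theta>')) \<in> (rstep R)\<^sup>*"
    and 2: "\<And>r. (replace_at s p (r \<cdot> \<theta>o), replace_at s p (r \<cdot> \<theta>')) \<in> (rstep R)\<^sup>*"
    using var_case[OF p sp d(2,3,4) red ri] by blast
  have "(replace_at s p (lo \<cdot> \<theta>'), replace_at s p (ro \<cdot> \<theta>')) \<in> rstep (sym_es B)" by (rule step_at[OF ro p])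
  then have "(replace_at s p (lo \<cdot> \<theta>'), replace_at s p (ro \<cdot> \<theta>')) \<in> (sym_step B)\<^sup>*"
    by (simp add: sym_step_eq)
  show ?thesis unfolding joinable_mod_def d(1)
    by (intro disjI1 exI[of _ "replace_at s p (lo \<cdot> \<theta>')"] exI[of _ "replace_at s p (ro \<cdot> \<theta>')"] conjI 1 2 \<open>(_, _) \<in> (sym_step B)\<^sup>*\<close>)
qed

lemma LinBR:
  fixes R B :: "('f, 'v) rule set"
  assumes ll: "left_linear R"
    and ro: "(lo, ro) \<in> R" and p: "in_poss p s" and sp: "subt_at s p = lo \<cdot> \<theta>o"
    and q1: "in_poss q1 lo" and lx: "subt_at lo q1 = Var x" and q2: "in_poss q2 (\<theta>o x)"
    and red: "subt_at (\<theta>o x) q2 = lb \<cdot> \<theta>b" and rb: "(lb, rb) \<in> sym_es B"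
  shows "joinable_mod R B (replace_at s p (ro \<cdot> \<theta>o)) (replace_at s (p @ q1 @ q2) (rb \<cdot> \<theta>b))"
proof -
  have lin: "linear_term lo" using ll ro unfolding left_linear_def by auto
  define \<theta>' where "\<theta>' = \<theta>o(x := replace_at (\<theta>o x) q2 (rb \<cdot> \<theta>b))"
  have u: "replace_at s (p @ q1 @ q2) (rb \<cdot> \<theta>b) = replace_at s p (lo \<cdot> \<theta>')"
    using replace_at_append[OF p, of "q1 @ q2"] sp linear_replace[where \<theta>=\<theta>o, OF lin q1 lx q2] by (simp add: \<theta>'_def)
  have sx: "(\<theta>o x, \<theta>' x) \<in> rstep (sym_es B)" unfolding \<theta>'_def using rb q2 red by (auto intro: rstepI)
  have all: "(\<theta>o y, \<theta>' y) \<in> (rstep (sym_es B))\<^sup>*" for y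
    using sx by (cases "y = x") (auto simp: \<theta>'_def)
  have 1: "(replace_at s p (ro \<cdot> \<theta>o), replace_at s p (ro \<cdot> \<theta>')) \<in> (sym_step B)\<^sup>*"
    unfolding sym_step_eq by (rule rsteps_ctx[OF subst_steps p]) (rule all)
  have 2: "(replace_at s p (lo \<cdot> \<theta>'), replace_at s p (ro \<cdot> \<theta>')) \<in> (rstep R)\<^sup>*"
    by (rule r_into_rtrancl[OF step_at[OF ro p]])
  show ?thesis unfolding joinable_mod_def u
    by (intro exI[of _ "replace_at s p (ro \<cdot> \<theta>o)"] exI[of _ "replace_at s p (ro \<cdot> \<theta>')"] conjI rtrancl.rtrancl_refl 1 2)
qed



lemma joinable_refl: "joinable R t t"
  unfolding joinable_def by (intro exI[of _ t] conjI rtrancl.rtrancl_refl)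

lemma joinable_sym: "joinable R t u \<Longrightarrow> joinable R u t"
  unfolding joinable_def by blast

lemma nabla_sym: "nabla R s t u \<Longrightarrow> nabla R s u t"
  unfolding nabla_def using joinable_sym sym_step_sym by metis

lemma nabla_self: "(s, t) \<in> (rstep R)\<^sup>+ \<Longrightarrow> nabla R s t t"
  unfolding nabla_def using joinable_refl by blast

lemma jor_sym: "joinable R a b \<or> (a, b) \<in> sym_step P \<Longrightarrow> joinable R b a \<or> (b, a) \<in> sym_step P"
  using joinable_sym sym_step_sym by metis

lemma inner_choice:
  assumes "\<not> (\<forall>q'. in_poss q' a \<and> q' \<noteq> [] \<longrightarrow> subt_at a q' \<in> NF R)"
  obtains q'' l r \<theta> where "in_poss q'' a" "q'' \<noteq> []" "(l, r) \<in> R" "subt_at a q'' = l \<cdot> \<theta>"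
    "\<forall>q'. in_poss q' (l \<cdot> \<theta>) \<and> q' \<noteq> [] \<longrightarrow> subt_at (l \<cdot> \<theta>) q' \<in> NF R"
proof -
  from assms obtain q' where q': "in_poss q' a" "q' \<noteq> []" "subt_at a q' \<notin> NF R" by blast
  from innermost[OF q'(1,3)] obtain q where
    q: "in_poss q a" "subt_at a q \<notin> NF R" "\<forall>q'. in_poss q' (subt_at a q) \<and> q' \<noteq> [] \<longrightarrow> subt_at (subt_at a q) q' \<in> NF R"
    by blast
  have "q \<noteq> []"
  proof
    assume "q = []"
    with q(3) q' show False by simp
  qed
  moreover obtain l r \<theta> where "(l, r) \<in> R" "subt_at a q = l \<cdot> \<theta>" using root_redex[OF q(2,3)] by blast
  ultimately show ?thesis using that q by metis
qed

lemma pos_facts: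
  assumes "in_poss p s" "subt_at s p = t"
  shows "in_poss (p @ q) s \<longleftrightarrow> in_poss q t" "in_poss q t \<Longrightarrow> subt_at s (p @ q) = subt_at t q"
  using assms by (auto simp: in_poss_append subt_at_append)

lemma RR_peak:
  fixes R :: "('f, 'v) rule set"
  assumes inf: "infinite (UNIV :: 'v set)" and trs: "wf_trs R"
    and ro: "(lo, ro) \<in> R" and p: "in_poss p s" and sp: "subt_at s p = lo \<cdot> \<theta>o"
    and q: "in_poss q (lo \<cdot> \<theta>o)" and sq: "subt_at (lo \<cdot> \<theta>o) q = li \<cdot> \<theta>i" and ri: "(li, ri) \<in> R"
  shows "\<exists>v. nabla R s (replace_at s p (ro \<cdot> \<theta>o)) v \<and> nabla R s v (replace_at s (p @ q) (ri \<cdot> \<theta>i))"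
proof -
  let ?xo = "replace_at s p (ro \<cdot> \<theta>o)" and ?xi = "replace_at s (p @ q) (ri \<cdot> \<theta>i)"
  have pq: "in_poss (p @ q) s" and spq: "subt_at s (p @ q) = li \<cdot> \<theta>i"
    using pos_facts[OF p sp] q sq by auto
  have so: "(s, ?xo) \<in> (rstep R)\<^sup>+" using rstepI[OF ro p sp refl] by blast
  have si: "(s, ?xi) \<in> (rstep R)\<^sup>+" using rstepI[OF ri pq spq refl] by blast
  show ?thesis
  proof (cases "\<forall>q'. in_poss q' (li \<cdot> \<theta>i) \<and> q' \<noteq> [] \<longrightarrow> subt_at (li \<cdot> \<theta>i) q' \<in> NF R")
    case True
    from jor_sym[OF PrimeRR[OF inf trs ro p sp q sq ri True]]
    have "nabla R s ?xo ?xi" unfolding nabla_def using so si by blast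
    then show ?thesis using nabla_self[OF so] by blast
  next
    case False
    then obtain q'' l r \<theta> where c: "in_poss q'' (li \<cdot> \<theta>i)" "q'' \<noteq> []" "(l, r) \<in> R" "subt_at (li \<cdot> \<theta>i) q'' = l \<cdot> \<theta>"
      "\<forall>q'. in_poss q' (l \<cdot> \<theta>) \<and> q' \<noteq> [] \<longrightarrow> subt_at (l \<cdot> \<theta>) q' \<in> NF R"
      by (rule inner_choice)
    let ?v = "replace_at s (p @ q @ q'') (r \<cdot> \<theta>)"
    have qq: "in_poss (q @ q'') (lo \<cdot> \<theta>o)" "subt_at (lo \<cdot> \<theta>o) (q @ q'') = l \<cdot> \<theta>"
      using pos_facts[OF q sq] c by auto
    have pqq: "in_poss (p @ q @ q'') s" "subt_at s (p @ q @ q'') = l \<cdot> \<theta>"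
      using pos_facts[OF p sp] qq by auto
    have sv: "(s, ?v) \<in> (rstep R)\<^sup>+" using rstepI[OF c(3) pqq refl] by blast
    have 1: "joinable R ?xo ?v \<or> (?xo, ?v) \<in> sym_step (PCP R)"
      using jor_sym[OF PrimeRR[OF inf trs ro p sp qq c(3,5)]] .
    have 2: "joinable R ?v ?xi \<or> (?v, ?xi) \<in> sym_step (PCP R)"
      using PrimeRR[OF inf trs ri pq spq c(1,4,3,5)] by simp
    show ?thesis using 1 2 so si sv unfolding nabla_def by blast
  qed
qed

theorem lemma3p15:
  fixes R B :: "('f, 'v) rule set" and s t u :: "('f, 'v) term"
  assumes vars_inf: "infinite (UNIV :: 'v set)"
    and trs: "wf_trs R" and ll: "left_linear R"
    and B: "var_balanced B"
  shows "((s, t) \<in> rstep R \<and> (s, u) \<in> rstep R \<longrightarrow>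
            (\<exists>v. nabla R s t v \<and> nabla R s v u))
       \<and> ((s, t) \<in> rstep R \<and> (s, u) \<in> sym_step B \<longrightarrow>
            (\<exists>v. nabla R s t v \<and> nabla_tilde R B s v u))"
proof (intro conjI impI; elim conjE)
  assume st: "(s, t) \<in> rstep R" and su: "(s, u) \<in> rstep R"
  from st obtain l1 r1 p1 \<theta>1 where 1: "(l1, r1) \<in> R" "in_poss p1 s" "subt_at s p1 = l1 \<cdot> \<theta>1" "t = replace_at s p1 (r1 \<cdot> \<theta>1)"
    by (rule rstepE)
  from su obtain l2 r2 p2 \<theta>2 where 2: "(l2, r2) \<in> R" "in_poss p2 s" "subt_at s p2 = l2 \<cdot> \<theta>2" "u = replace_at s p2 (r2 \<cdot> \<theta>2)"
    by (rule rstepE)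
  consider (a) q where "p2 = p1 @ q" | (b) q where "p1 = p2 @ q" | (c) "par p1 p2" unfolding par_def by blast
  then show "\<exists>v. nabla R s t v \<and> nabla R s v u"
  proof cases
    case (a q)
    have "in_poss q (l1 \<cdot> \<theta>1)" "subt_at (l1 \<cdot> \<theta>1) q = l2 \<cdot> \<theta>2"
      using pos_facts[OF 1(2,3), of q] 2(2,3) a by auto
    from RR_peak[OF vars_inf trs 1(1,2,3) this 2(1)] show ?thesis using 1(4) 2(4) a by simp
  next
    case (b q)
    have "in_poss q (l2 \<cdot> \<theta>2)" "subt_at (l2 \<cdot> \<theta>2) q = l1 \<cdot> \<theta>1"
      using pos_facts[OF 2(2,3), of q] 1(2,3) b by auto
    from RR_peak[OF vars_inf trs 2(1,2,3) this 1(1)] show ?thesis using 1(4) 2(4) b nabla_sym by metis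
  next
    case c
    from par_peak[OF c 1(2) 2(2) 1(3) 2(3) 1(1) 2(1)] obtain w where
      "(t, w) \<in> rstep R" "(u, w) \<in> rstep R" using 1(4) 2(4) by blast
    then have "joinable R t u" unfolding joinable_def by blast
    then show ?thesis using st su unfolding nabla_def using joinable_refl by blast
  qed
next
  assume st: "(s, t) \<in> rstep R" and su: "(s, u) \<in> sym_step B"
  have suB: "(s, u) \<in> (sym_step B)\<^sup>*" using su by blast
  have stp: "(s, t) \<in> (rstep R)\<^sup>+" using st by blast
  from st obtain l1 r1 p1 \<theta>1 where 1: "(l1, r1) \<in> R" "in_poss p1 s" "subt_at s p1 = l1 \<cdot> \<theta>1" "t = replace_at s p1 (r1 \<cdot> \<theta>1)"
    by (rule rstepE)
  from su[unfolded sym_step_eq] obtain l2 r2 p2 \<theta>2 where 2: "(l2, r2) \<in> sym_es B" "in_poss p2 s" "subt_at s p2 = l2 \<cdot> \<theta>2" "u = replace_at s p2 (r2 \<cdot> \<theta>2)"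
    by (rule rstepE)
  have tt: "nabla R s t t" using nabla_self[OF stp] .
  consider (a) q where "p2 = p1 @ q" | (b) q where "p1 = p2 @ q" | (c) "par p1 p2" unfolding par_def by blast
  then show "\<exists>v. nabla R s t v \<and> nabla_tilde R B s v u"
  proof cases
    case c
    from par_peak[OF c 1(2) 2(2) 1(3) 2(3) 1(1) 2(1)] obtain w where
      w: "(t, w) \<in> rstep (sym_es B)" "(u, w) \<in> rstep R" using 1(4) 2(4) by blast
    have "joinable_mod R B t u" unfolding joinable_mod_def
      by (intro exI[of _ t] exI[of _ w] conjI rtrancl.rtrancl_refl r_into_rtrancl w(2))
         (use w(1) in \<open>simp add: sym_step_eq r_into_rtrancl\<close>)
    then show ?thesis using tt stp suB unfolding nabla_tilde_def by blast
  next
    case (b q)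
    have q: "in_poss q (l2 \<cdot> \<theta>2)" "subt_at (l2 \<cdot> \<theta>2) q = l1 \<cdot> \<theta>1"
      using pos_facts[OF 2(2,3), of q] 1(2,3) b by auto
    show ?thesis
    proof (cases "\<forall>q'. in_poss q' (l1 \<cdot> \<theta>1) \<and> q' \<noteq> [] \<longrightarrow> subt_at (l1 \<cdot> \<theta>1) q' \<in> NF R")
      case True
      from PrimeRB[OF vars_inf B 2(1,2,3) q 1(1) True]
      have "joinable_mod R B t u \<or> (t, u) \<in> sym_step (PCP_pm R B)" using 1(4) 2(4) b by simp
      then show ?thesis using tt stp suB unfolding nabla_tilde_def by blast
    next
      case False
      then obtain q'' l r \<theta> where c: "in_poss q'' (l1 \<cdot> \<theta>1)" "q'' \<noteq> []" "(l, r) \<in> R" "subt_at (l1 \<cdot> \<theta>1) q'' = l \<cdot> \<theta>"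
        "\<forall>q'. in_poss q' (l \<cdot> \<theta>) \<and> q' \<noteq> [] \<longrightarrow> subt_at (l \<cdot> \<theta>) q' \<in> NF R"
        by (rule inner_choice)
      let ?v = "replace_at s (p1 @ q'') (r \<cdot> \<theta>)"
      have qq: "in_poss (q @ q'') (l2 \<cdot> \<theta>2)" "subt_at (l2 \<cdot> \<theta>2) (q @ q'') = l \<cdot> \<theta>"
        using pos_facts[OF q] c by auto
      have pq: "in_poss (p1 @ q'') s" "subt_at s (p1 @ q'') = l \<cdot> \<theta>"
        using pos_facts[OF 1(2,3)] c by auto
      have sv: "(s, ?v) \<in> (rstep R)\<^sup>+" using rstepI[OF c(3) pq refl] by blast
      have x1: "joinable R t ?v \<or> (t, ?v) \<in> sym_step (PCP R)"
        using jor_sym[OF PrimeRR[OF vars_inf trs 1(1,2,3) c(1,4,3,5)]] 1(4) by simp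
      have x2: "joinable_mod R B ?v u \<or> (?v, u) \<in> sym_step (PCP_pm R B)"
        using PrimeRB[OF vars_inf B 2(1,2,3) qq c(3,5)] 2(4) b by simp
      show ?thesis using x1 x2 sv stp suB unfolding nabla_def nabla_tilde_def by blast
    qed
  next
    case (a q)
    have q: "in_poss q (l1 \<cdot> \<theta>1)" "subt_at (l1 \<cdot> \<theta>1) q = l2 \<cdot> \<theta>2"
      using pos_facts[OF 1(2,3), of q] 2(2,3) a by auto
    show ?thesis
    proof (cases "fun_poss q l1")
      case False
      then obtain q1 q2 x where d: "q = q1 @ q2" "in_poss q1 l1" "subt_at l1 q1 = Var x" "in_poss q2 (\<theta>1 x)"
        using poss_decomp[OF q(1)] by blast
      have red: "subt_at (\<theta>1 x) q2 = l2 \<cdot> \<theta>2" using q(2) var_sub[OF d(2,3)] d(1) by simp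
      from LinBR[OF ll 1(1,2,3) d(2,3,4) red 2(1)]
      have "joinable_mod R B t u" using 1(4) 2(4) a d(1) by simp
      then show ?thesis using tt stp suB unfolding nabla_tilde_def by blast
    next
      case fp: True
      show ?thesis
      proof (cases "\<forall>q'. in_poss q' (l2 \<cdot> \<theta>2) \<and> q' \<noteq> [] \<longrightarrow> subt_at (l2 \<cdot> \<theta>2) q' \<in> NF R")
        case True
        from CP_ctx[OF vars_inf 2(1) 1(1) wf_trs_vars[OF trs 1(1)] 1(2,3) fp q(2) True]
        have "u = t \<or> (u, t) \<in> rstep (PCP_gen R (sym_es B) R)" using 1(4) 2(4) a by simp
        then have "u = t \<or> (t, u) \<in> sym_step (PCP_pm R B)"
          using rstep_mono[of "PCP_gen R (sym_es B) R" "PCP_pm R B"] by (auto simp: PCP_pm_def sym_step_def)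
        then have "joinable_mod R B t u \<or> (t, u) \<in> sym_step (PCP_pm R B)"
        proof
          assume "u = t"
          then show ?thesis unfolding joinable_mod_def
            by (intro disjI1 exI[of _ t] exI[of _ t] conjI rtrancl.rtrancl_refl) simp
        qed simp
        then show ?thesis using tt stp suB unfolding nabla_tilde_def by blast
      next
        case False
        then obtain q'' l r \<theta> where c: "in_poss q'' (l2 \<cdot> \<theta>2)" "q'' \<noteq> []" "(l, r) \<in> R" "subt_at (l2 \<cdot> \<theta>2) q'' = l \<cdot> \<theta>"
          "\<forall>q'. in_poss q' (l \<cdot> \<theta>) \<and> q' \<noteq> [] \<longrightarrow> subt_at (l \<cdot> \<theta>) q' \<in> NF R"
          by (rule inner_choice)
        let ?v = "replace_at s (p2 @ q'') (r \<cdot> \<theta>)"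
        have qq: "in_poss (q @ q'') (l1 \<cdot> \<theta>1)" "subt_at (l1 \<cdot> \<theta>1) (q @ q'') = l \<cdot> \<theta>"
          using pos_facts[OF q] c by auto
        have pq: "in_poss (p2 @ q'') s" "subt_at s (p2 @ q'') = l \<cdot> \<theta>"
          using pos_facts[OF 2(2,3)] c by auto
        have sv: "(s, ?v) \<in> (rstep R)\<^sup>+" using rstepI[OF c(3) pq refl] by blast
        have x1: "joinable R t ?v \<or> (t, ?v) \<in> sym_step (PCP R)"
          using jor_sym[OF PrimeRR[OF vars_inf trs 1(1,2,3) qq c(3,5)]] 1(4) a by simp
        have x2: "joinable_mod R B ?v u \<or> (?v, u) \<in> sym_step (PCP_pm R B)"
          using PrimeRB[OF vars_inf B 2(1,2,3) c(1,4,3,5)] 2(4) by simp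
        show ?thesis using x1 x2 sv stp suB unfolding nabla_def nabla_tilde_def by blast
      qed
    qed
  qed
qed

end
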